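(* Let $(\mathcal{F},\varphi,x)$ be a Shintani datum and $(a_0,\dots,a_r,b_1,\dots,b_{r+1})$ a compatible system for it. Then \[ \varphi(a_0)-\partial_v(b_1)\in D, \] where $\varphi(a_0)-\partial_v(b_1)\in R_{0,r}=\mathbb{Z}[N_F]$.
   Context: Let $F$ be a totally real number field, $S$ a finite set of places containing the archimedean places, $V=\{v_1,\dots,v_r\}\subsetneq S$ with a fixed order $v_1<\dots<v_r$. For $v\in S$ fix open subgroups $J_v\subset F_v^\times$; for finite $v\notin S$ put $J_v=O_v^\times$. Put $N_v=F_v^\times/J_v$, $N_F=\mathbb{A}_F^\times/\prod_vJ_v$ (containing each $N_v$); $F^\times$ acts via the diagonal map $F^\times\to N_F$. Unadorned $\otimes$ is $\otimes_{\mathbb{Z}[F^\times]}$; for an $F^\times$-module $M$, $IM=\ker(M\to\mathbb{Z}\otimes M)$. For an abelian group $A$ and subgroup $U$, $I_{U,A}=\ker(\mathbb{Z}[A]\to\mathbb{Z}[A/U])$; $D=\prod_{v\in V}I_{N_v,N_F}\subset\mathbb{Z}[N_F]$ (product of ideals). $\mathbf{Sub}(V)$: subsets of $V$ with inclusions. For a functor $\mathcal{F}:\mathbf{Sub}(V)^{op}\to(\mathbb{Z}[F^\times]\text{-modules})$ and $U\subset W$, $r^W_U$ is the induced map. $R(W)=\mathbb{Z}[N_F/\prod_{v\in V\setminus W}N_v]$ with natural projections (so $R(V)=\mathbb{Z}[N_F]$). A Shintani datum is $(\mathcal{F},\varphi,x)$ with $\mathcal{F}$ such a functor, $\varphi:\mathcal{F}\to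 R$ a natural transformation, $x\in\mathcal{F}(V)/I\mathcal{F}(V)$, such that (i) $H_i(F^\times,\mathcal{F}(W))=0$ for $i>0$, $W\subset V$; (ii) $r^V_W(\bar x)\in I\mathcal{F}(W)$ for all $W\subsetneq V$ ($\bar x$ a lift of $x$). For a functor $\mathcal{G}$ (e.g. $\mathcal{F}$ or $R$) put $\mathcal{G}(k)=\bigoplus_{\#W=k}\mathcal{G}(W)$ and $\partial(y)=\sum_{i=1}^k(-1)^{i-1}r^W_{W\setminus\{w_i\}}(y)$ for $y\in\mathcal{G}(W)$, $W=\{w_1<\dots<w_k\}$. Fix a free resolution $\cdots\to\mathcal{I}_1\to\mathcal{I}_0\to\mathbb{Z}\to0$ by free $\mathbb{Z}[F^\times]$-modules with $\mathcal{I}_0=\mathbb{Z}[F^\times]$ and the augmentation map (so $\mathcal{I}_0\otimes M=M$). Put $\mathcal{F}_{i,j}=\mathcal{I}_i\otimes\mathcal{F}(j)$, $R_{i,j}=\mathcal{I}_i\otimes R(j)$, $\partial_v$ induced by the resolution, $\partial_h=\mathrm{id}\otimes\partial$, $\varphi=\mathrm{id}\otimes\varphi$. A compatible system for $(\mathcal{F},\varphi,x)$ is $(a_0,\dots,a_r,b_1,\dots,b_{r+1})$ with $a_j\in\mathcal{F}_{j,r-j}$, $b_j\in R_{j,r-j+1}$, such that $a_0\in\mathcal{F}(V)$ lifts $x$, $\partial_v(a_{j+1})=\partial_h(a_j)$ ($0\le j\le r-1$), and $\partial_h(b_j)=\varphi(a_j)-\partial_v(b_{j+1})$ ($1\le j\le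 r$). *)

theory Defs
  imports Main "HOL-Library.Poly_Mapping" "HOL-Library.Function_Algebras"
begin

(* The group F^x is an abelian
group type 'g (written additively), N_F is an abelian group type 'n (written additively),
the places are natural numbers ordered by the usual order, V is a finite set of places,
N v (v in V) are the subgroups N_v of N_F, delta is the diagonal map F^x to N_F.
Group rings Z[A] are finitely supported functions A to int (poly_mapping), whose
multiplication is the convolution product. *)

definition zsc :: "int \<Rightarrow> 'x::ab_group_add \<Rightarrow> 'x" where
  "zsc k x = (if 0 \<le> k then (\<Sum>i<nat k. x) else - (\<Sum>i<nat (-k). x))"

definition gsmul :: "('g \<Rightarrow> 'x \<Rightarrow> 'x) \<Rightarrow> ('g \<Rightarrow>\<^sub>0 int) \<Rightarrow> 'x::ab_group_add \<Rightarrow> 'x" where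
  "gsmul act c x = (\<Sum>g\<in>Poly_Mapping.keys c. zsc (Poly_Mapping.lookup c g) (act g x))"

definition ringact :: "'g::monoid_add \<Rightarrow> ('g \<Rightarrow>\<^sub>0 int) \<Rightarrow> ('g \<Rightarrow>\<^sub>0 int)" where
  "ringact g c = Poly_Mapping.single g 1 * c"

definition augm :: "('g \<Rightarrow>\<^sub>0 int) \<Rightarrow> int" where
  "augm c = (\<Sum>g\<in>Poly_Mapping.keys c. Poly_Mapping.lookup c g)"

definition is_gmod :: "('g::ab_group_add \<Rightarrow> 'x \<Rightarrow> 'x) \<Rightarrow> 'x::ab_group_add set \<Rightarrow> bool" where
  "is_gmod act M \<longleftrightarrow> 0 \<in> M \<and> (\<forall>x\<in>M. \<forall>y\<in>M. x + y \<in> M) \<and> (\<forall>x\<in>M. - x \<in> M)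
     \<and> (\<forall>g. \<forall>x\<in>M. act g x \<in> M) \<and> (\<forall>x\<in>M. act 0 x = x)
     \<and> (\<forall>g h. \<forall>x\<in>M. act (g + h) x = act g (act h x))
     \<and> (\<forall>g. \<forall>x\<in>M. \<forall>y\<in>M. act g (x + y) = act g x + act g y)"

definition is_glin :: "('g \<Rightarrow> 'x \<Rightarrow> 'x) \<Rightarrow> 'x::ab_group_add set \<Rightarrow> ('g \<Rightarrow> 'y \<Rightarrow> 'y)
    \<Rightarrow> 'y::ab_group_add set \<Rightarrow> ('x \<Rightarrow> 'y) \<Rightarrow> bool" where
  "is_glin act1 M1 act2 M2 f \<longleftrightarrow> (\<forall>x\<in>M1. f x \<in> M2) \<and> (\<forall>x\<in>M1. \<forall>y\<in>M1. f (x + y) = f x + f y)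
     \<and> (\<forall>g. \<forall>x\<in>M1. f (act1 g x) = act2 g (f x))"

(* IM = ker(M \<rightarrow> Z \<otimes> M), i.e. the subgroup generated by the elements g m - m. *)
definition Iaug :: "('g \<Rightarrow> 'x \<Rightarrow> 'x) \<Rightarrow> 'x::ab_group_add set \<Rightarrow> 'x set" where
  "Iaug act M = {x. \<exists>(n::nat) g m. (\<forall>i<n. m i \<in> M) \<and> x = (\<Sum>i<n. act (g i) (m i) - m i)}"

(* For a free Z[G]-module I with basis B, I \<otimes>_{Z[G]} M is identified with the finitely
supported functions B \<rightarrow> M. *)
definition tens :: "'b set \<Rightarrow> 'x::zero set \<Rightarrow> ('b \<Rightarrow> 'x) set" where
  "tens B M = {y. (\<forall>e. y e \<in> M) \<and> (\<forall>e. e \<notin> B \<longrightarrow> y e = 0) \<and> finite {e. y e \<noteq> 0}}"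

(* Boundary of the resolution, given by the matrix d (d e e' = coefficient of the
basis element e' in the boundary of the basis element e), tensored with M. *)
definition dv :: "('g \<Rightarrow> 'x \<Rightarrow> 'x) \<Rightarrow> 'b set \<Rightarrow> ('b \<Rightarrow> 'b \<Rightarrow> ('g \<Rightarrow>\<^sub>0 int))
    \<Rightarrow> ('b \<Rightarrow> 'x::ab_group_add) \<Rightarrow> ('b \<Rightarrow> 'x)" where
  "dv act B d y = (\<lambda>e'. \<Sum>e\<in>{e\<in>B. y e \<noteq> 0}. gsmul act (d e e') (y e))"

(* A free resolution ... \<rightarrow> I_1 \<rightarrow> I_0 = Z[G] \<rightarrow> Z \<rightarrow> 0, I_i free with basis Bas i,
boundary I_(i+1) \<rightarrow> I_i given by the matrix d i. *)

definition free_resolution :: "(nat \<Rightarrow> 'b set) \<Rightarrow> (nat \<Rightarrow> 'b \<Rightarrow> 'b \<Rightarrow> ('g::ab_group_add \<Rightarrow>\<^sub>0 int))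
    \<Rightarrow> 'b \<Rightarrow> bool" where
  "free_resolution Bas d e0 \<longleftrightarrow> Bas 0 = {e0}
     \<and> (\<forall>i. \<forall>e\<in>Bas (Suc i). finite {e'. d i e e' \<noteq> 0} \<and> (\<forall>e'. d i e e' \<noteq> 0 \<longrightarrow> e' \<in> Bas i))
     \<and> (\<forall>y\<in>tens (Bas 0) UNIV. augm (y e0) = 0 \<longleftrightarrow>
          (\<exists>z\<in>tens (Bas 1) UNIV. dv ringact (Bas 1) (d 0) z = y))
     \<and> (\<forall>i. \<forall>y\<in>tens (Bas (Suc i)) UNIV. dv ringact (Bas (Suc i)) (d i) y = (\<lambda>_. 0) \<longleftrightarrow>
          (\<exists>z\<in>tens (Bas (Suc (Suc i))) UNIV. dv ringact (Bas (Suc (Suc i))) (d (Suc i)) z = y))"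

(* G(k) = direct sum of G(W) over W \<subseteq> V with #W = k, as functions on subsets. *)
definition dsumk :: "nat set \<Rightarrow> (nat set \<Rightarrow> 'x::zero set) \<Rightarrow> nat \<Rightarrow> (nat set \<Rightarrow> 'x) set" where
  "dsumk V C k = {y. \<forall>W. (W \<subseteq> V \<and> card W = k \<longrightarrow> y W \<in> C W) \<and> (\<not> (W \<subseteq> V \<and> card W = k) \<longrightarrow> y W = 0)}"

definition pact :: "('g \<Rightarrow> 'x \<Rightarrow> 'x) \<Rightarrow> 'g \<Rightarrow> (nat set \<Rightarrow> 'x) \<Rightarrow> (nat set \<Rightarrow> 'x)" where
  "pact act g y = (\<lambda>W. act g (y W))"

(* The map \<partial>: G(k) \<rightarrow> G(k-1), with sign (-1)^(i-1) for w = w_i the i-th element of W. *)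
definition hdiff :: "nat set \<Rightarrow> (nat set \<Rightarrow> nat set \<Rightarrow> 'x \<Rightarrow> 'x) \<Rightarrow> (nat set \<Rightarrow> 'x::ab_group_add)
    \<Rightarrow> (nat set \<Rightarrow> 'x)" where
  "hdiff V res y = (\<lambda>U. if U \<subseteq> V then
      (\<Sum>w\<in>V - U. zsc ((-1) ^ card {u\<in>U. u < w}) (res (insert w U) U (y (insert w U)))) else 0)"

definition phik :: "nat set \<Rightarrow> (nat set \<Rightarrow> 'x \<Rightarrow> 'y) \<Rightarrow> (nat set \<Rightarrow> 'x) \<Rightarrow> (nat set \<Rightarrow> 'y::zero)" where
  "phik V phi y = (\<lambda>W. if W \<subseteq> V then phi W (y W) else 0)"

definition Hsub :: "(nat \<Rightarrow> 'n::ab_group_add set) \<Rightarrow> nat set \<Rightarrow> nat set \<Rightarrow> 'n set" where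
  "Hsub N V W = {x. \<exists>n. (\<forall>v\<in>V - W. n v \<in> N v) \<and> x = (\<Sum>v\<in>V - W. n v)}"

definition cplus :: "'n::ab_group_add set \<Rightarrow> 'n set \<Rightarrow> 'n set" where
  "cplus C H = {c + h | c h. c \<in> C \<and> h \<in> H}"

(* Z[N_F/H] is represented by finitely supported functions on cosets of H (elements of
type 'n set \<Rightarrow>\<^sub>0 int whose Poly_Mapping.keys are cosets of H). *)
definition Rc :: "(nat \<Rightarrow> 'n::ab_group_add set) \<Rightarrow> nat set \<Rightarrow> nat set \<Rightarrow> ('n set \<Rightarrow>\<^sub>0 int) set" where
  "Rc N V W = {f. \<forall>C\<in>Poly_Mapping.keys f. \<exists>a. C = cplus {a} (Hsub N V W)}"

definition pz :: "'n::ab_group_add set \<Rightarrow> ('n \<Rightarrow>\<^sub>0 int) \<Rightarrow> ('n set \<Rightarrow>\<^sub>0 int)" where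
  "pz H f = (\<Sum>a\<in>Poly_Mapping.keys f. Poly_Mapping.single (cplus {a} H) (Poly_Mapping.lookup f a))"

definition projc :: "'n::ab_group_add set \<Rightarrow> ('n set \<Rightarrow>\<^sub>0 int) \<Rightarrow> ('n set \<Rightarrow>\<^sub>0 int)" where
  "projc H f = (\<Sum>C\<in>Poly_Mapping.keys f. Poly_Mapping.single (cplus C H) (Poly_Mapping.lookup f C))"

definition resR :: "(nat \<Rightarrow> 'n::ab_group_add set) \<Rightarrow> nat set \<Rightarrow> nat set \<Rightarrow> nat set
    \<Rightarrow> ('n set \<Rightarrow>\<^sub>0 int) \<Rightarrow> ('n set \<Rightarrow>\<^sub>0 int)" where
  "resR N V W U f = projc (Hsub N V U) f"

definition actR :: "('g \<Rightarrow> 'n::ab_group_add) \<Rightarrow> 'g \<Rightarrow> ('n set \<Rightarrow>\<^sub>0 int) \<Rightarrow> ('n set \<Rightarrow>\<^sub>0 int)" where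
  "actR delta g f = (\<Sum>C\<in>Poly_Mapping.keys f. Poly_Mapping.single ((\<lambda>x. x + delta g) ` C) (Poly_Mapping.lookup f C))"

(* The identification Z[N_F] = R(V). *)
definition emb :: "('n::ab_group_add \<Rightarrow>\<^sub>0 int) \<Rightarrow> ('n set \<Rightarrow>\<^sub>0 int)" where
  "emb f = pz {0} f"

definition Iker :: "'n::ab_group_add set \<Rightarrow> ('n \<Rightarrow>\<^sub>0 int) set" where
  "Iker H = {f. pz H f = 0}"

definition ideal_mult :: "'a::semiring_0 set \<Rightarrow> 'a set \<Rightarrow> 'a set" where
  "ideal_mult I J = {x. \<exists>(n::nat) (p::nat \<Rightarrow> 'a) q. (\<forall>i<n. p i \<in> I \<and> q i \<in> J) \<and> x = (\<Sum>i<n. p i * q i)}"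

(* D = the product of the ideals I(N_v,N_F), v in V (product of ideals; the empty product is the unit ideal). *)
definition Dideal :: "(nat \<Rightarrow> 'n::ab_group_add set) \<Rightarrow> nat set \<Rightarrow> ('n \<Rightarrow>\<^sub>0 int) set" where
  "Dideal N V = foldr (\<lambda>v J. ideal_mult (Iker (N v)) J) (sorted_list_of_set V) UNIV"

definition setting_ok :: "nat set \<Rightarrow> (nat \<Rightarrow> 'n::ab_group_add set) \<Rightarrow> ('g::ab_group_add \<Rightarrow> 'n) \<Rightarrow> bool" where
  "setting_ok V N delta \<longleftrightarrow> finite V
     \<and> (\<forall>x y. delta (x + y) = delta x + delta y)
     \<and> (\<forall>v\<in>V. 0 \<in> N v \<and> (\<forall>x\<in>N v. \<forall>y\<in>N v. x + y \<in> N v) \<and> (\<forall>x\<in>N v. - x \<in> N v))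
     \<and> (\<forall>n. (\<forall>v\<in>V. n v \<in> N v) \<and> (\<Sum>v\<in>V. n v) = 0 \<longrightarrow> (\<forall>v\<in>V. n v = 0))"

definition functor_ok :: "nat set \<Rightarrow> ('g::ab_group_add \<Rightarrow> 'm \<Rightarrow> 'm) \<Rightarrow> (nat set \<Rightarrow> 'm::ab_group_add set)
    \<Rightarrow> (nat set \<Rightarrow> nat set \<Rightarrow> 'm \<Rightarrow> 'm) \<Rightarrow> bool" where
  "functor_ok V act Fc res \<longleftrightarrow> (\<forall>W. W \<subseteq> V \<longrightarrow> is_gmod act (Fc W))
     \<and> (\<forall>U W. U \<subseteq> W \<and> W \<subseteq> V \<longrightarrow> is_glin act (Fc W) act (Fc U) (res W U))
     \<and> (\<forall>W. W \<subseteq> V \<longrightarrow> (\<forall>y\<in>Fc W. res W W y = y))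
     \<and> (\<forall>U W X. U \<subseteq> W \<and> W \<subseteq> X \<and> X \<subseteq> V \<longrightarrow> (\<forall>y\<in>Fc X. res W U (res X W y) = res X U y))"

definition nat_trans_ok :: "nat set \<Rightarrow> (nat \<Rightarrow> 'n::ab_group_add set) \<Rightarrow> ('g::ab_group_add \<Rightarrow> 'n)
    \<Rightarrow> ('g \<Rightarrow> 'm \<Rightarrow> 'm) \<Rightarrow> (nat set \<Rightarrow> 'm::ab_group_add set) \<Rightarrow> (nat set \<Rightarrow> nat set \<Rightarrow> 'm \<Rightarrow> 'm)
    \<Rightarrow> (nat set \<Rightarrow> 'm \<Rightarrow> ('n set \<Rightarrow>\<^sub>0 int)) \<Rightarrow> bool" where
  "nat_trans_ok V N delta act Fc res phi \<longleftrightarrow>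
     (\<forall>W. W \<subseteq> V \<longrightarrow> is_glin act (Fc W) (actR delta) (Rc N V W) (phi W))
     \<and> (\<forall>U W. U \<subseteq> W \<and> W \<subseteq> V \<longrightarrow> (\<forall>y\<in>Fc W. phi U (res W U y) = resR N V W U (phi W y)))"

(* Shintani datum (F, phi, x), where x is the class of xbar \<in> F(V) modulo I F(V);
H_i(F^x, M) is computed with the fixed resolution. *)
definition shintani_datum :: "nat set \<Rightarrow> (nat \<Rightarrow> 'n::ab_group_add set) \<Rightarrow> ('g::ab_group_add \<Rightarrow> 'n)
    \<Rightarrow> (nat \<Rightarrow> 'b set) \<Rightarrow> (nat \<Rightarrow> 'b \<Rightarrow> 'b \<Rightarrow> ('g \<Rightarrow>\<^sub>0 int))
    \<Rightarrow> ('g \<Rightarrow> 'm \<Rightarrow> 'm) \<Rightarrow> (nat set \<Rightarrow> 'm::ab_group_add set) \<Rightarrow> (nat set \<Rightarrow> nat set \<Rightarrow> 'm \<Rightarrow> 'm)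
    \<Rightarrow> (nat set \<Rightarrow> 'm \<Rightarrow> ('n set \<Rightarrow>\<^sub>0 int)) \<Rightarrow> 'm \<Rightarrow> bool" where
  "shintani_datum V N delta Bas d act Fc res phi xbar \<longleftrightarrow>
     functor_ok V act Fc res \<and> nat_trans_ok V N delta act Fc res phi \<and> xbar \<in> Fc V
     \<and> (\<forall>W i. W \<subseteq> V \<and> 1 \<le> i \<longrightarrow> (\<forall>y\<in>tens (Bas i) (Fc W). dv act (Bas i) (d (i - 1)) y = (\<lambda>_. 0) \<longrightarrow>
            (\<exists>z\<in>tens (Bas (Suc i)) (Fc W). dv act (Bas (Suc i)) (d i) z = y)))
     \<and> (\<forall>W. W \<subset> V \<longrightarrow> res V W xbar \<in> Iaug act (Fc W))"

(* Compatible system (a_0..a_r, b_1..b_{r+1}), r = #V; a j \<in> F_{j,r-j}, b j \<in> R_{j,r-j+1}. *)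
definition compatible_system :: "nat set \<Rightarrow> (nat \<Rightarrow> 'n::ab_group_add set) \<Rightarrow> ('g::ab_group_add \<Rightarrow> 'n)
    \<Rightarrow> (nat \<Rightarrow> 'b set) \<Rightarrow> (nat \<Rightarrow> 'b \<Rightarrow> 'b \<Rightarrow> ('g \<Rightarrow>\<^sub>0 int)) \<Rightarrow> 'b
    \<Rightarrow> ('g \<Rightarrow> 'm \<Rightarrow> 'm) \<Rightarrow> (nat set \<Rightarrow> 'm::ab_group_add set) \<Rightarrow> (nat set \<Rightarrow> nat set \<Rightarrow> 'm \<Rightarrow> 'm)
    \<Rightarrow> (nat set \<Rightarrow> 'm \<Rightarrow> ('n set \<Rightarrow>\<^sub>0 int)) \<Rightarrow> 'm
    \<Rightarrow> (nat \<Rightarrow> 'b \<Rightarrow> nat set \<Rightarrow> 'm) \<Rightarrow> (nat \<Rightarrow> 'b \<Rightarrow> nat set \<Rightarrow> ('n set \<Rightarrow>\<^sub>0 int)) \<Rightarrow> bool" where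
  "compatible_system V N delta Bas d e0 act Fc res phi xbar a b \<longleftrightarrow>
     (let r = card V in
       (\<forall>j\<le>r. a j \<in> tens (Bas j) (dsumk V Fc (r - j)))
     \<and> (\<forall>j. 1 \<le> j \<and> j \<le> r + 1 \<longrightarrow> b j \<in> tens (Bas j) (dsumk V (Rc N V) (r + 1 - j)))
     \<and> a 0 e0 V - xbar \<in> Iaug act (Fc V)
     \<and> (\<forall>j<r. dv (pact act) (Bas (Suc j)) (d j) (a (Suc j)) = (\<lambda>e. hdiff V res (a j e)))
     \<and> (\<forall>j. 1 \<le> j \<and> j \<le> r \<longrightarrow>
          (\<lambda>e. hdiff V (resR N V) (b j e))
            = (\<lambda>e W. phik V phi (a j e) W - dv (pact (actR delta)) (Bas (Suc j)) (d j) (b (Suc j)) e W)))"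

end

theory Submission imports Defs begin

lemma zsc_nonneg: "0 \<le> k \<Longrightarrow> zsc k x = (\<Sum>i<nat k. x)"
  by (simp add: zsc_def)

lemma zsc_zero_left[simp]: "zsc 0 x = 0" by (simp add: zsc_def)
lemma zsc_one[simp]: "zsc 1 x = x" by (simp add: zsc_def)
lemma zsc_minus_one[simp]: "zsc (-1) x = - x" by (simp add: zsc_def)

lemma zsc_sign: "zsc ((-1)^n) x = (if even n then x else - x)"
  by (cases "even n") simp_all

lemma zsc_closed:
  assumes "0 \<in> M" "\<And>x y. x \<in> M \<Longrightarrow> y \<in> M \<Longrightarrow> x + y \<in> M" "\<And>x. x \<in> M \<Longrightarrow> - x \<in> M" "x \<in> M"
  shows "zsc k x \<in> M"
proof -
  have s: "(\<Sum>i<n. x) \<in> M" for n::nat by (induction n) (auto intro: assms)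
  show ?thesis unfolding zsc_def using s assms by auto
qed

lemma zsc_hom:
  assumes "0 \<in> M" "\<And>x y. x \<in> M \<Longrightarrow> y \<in> M \<Longrightarrow> x + y \<in> M" "\<And>x. x \<in> M \<Longrightarrow> - x \<in> M" "x \<in> M"
    and F: "\<And>x y. x \<in> M \<Longrightarrow> y \<in> M \<Longrightarrow> F (x + y) = F x + F y"
  shows "F (zsc k x) = zsc k (F x)"
proof -
  have s: "(\<Sum>i<n. x) \<in> M" for n::nat by (induction n) (auto intro: assms)
  have F0: "F 0 = 0" using F[of 0 0] assms(1) by simp
  have Fn: "F (- y) = - F y" if "y \<in> M" for y
  proof -
    have "F y + F (- y) = 0" using F[of y "-y"] that assms F0 by simp
    then show ?thesis by (simp add: add.commute eq_neg_iff_add_eq_0)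
  qed
  have Fs: "F (\<Sum>i<n. x) = (\<Sum>i<n. F x)" for n::nat
    by (induction n) (auto simp: F0 F s assms(4))
  show ?thesis unfolding zsc_def using Fs Fn s by auto
qed

lemma zsc_hom_UNIV:
  assumes F: "\<And>x y. F (x + y) = F x + F y"
  shows "F (zsc k x) = zsc k (F x)"
  by (rule zsc_hom[where M=UNIV]) (auto simp: F)

lemma zsc_int: "zsc k (m::int) = k * m"
  by (auto simp: zsc_def)

lemma zsc_succ: "zsc (k + 1) x = zsc k x + x"
proof (cases "0 \<le> k")
  case True
  then have "nat (k+1) = Suc (nat k)" by simp
  then show ?thesis using True by (simp add: zsc_def)
next
  case False
  show ?thesis
  proof (cases "k = -1")
    case True then show ?thesis by simp
  next
    case F2: False
    then have "nat (-k) = Suc (nat (-(k+1)))" using False by simp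
    then show ?thesis using False F2 by (simp add: zsc_def)
  qed
qed

lemma zsc_add: "zsc (k + l) x = zsc k x + zsc l x"
proof (induction l rule: int_induct[where k=0])
  case base then show ?case by simp
next
  case (step1 i) then show ?case
    by (metis add.assoc zsc_succ)
next
  case (step2 i)
  have "zsc (k + (i - 1) + 1) x = zsc (k + (i - 1)) x + x" by (rule zsc_succ)
  moreover have "zsc (i - 1 + 1) x = zsc (i - 1) x + x" by (rule zsc_succ)
  ultimately show ?case using step2 by (simp add: algebra_simps)
qed

lemma zsc_zero_right[simp]: "zsc k (0::'a::ab_group_add) = 0"
  by (simp add: zsc_def)

lemma zsc_pm: "zsc k (p :: 'a \<Rightarrow>\<^sub>0 int) = frag_cmul k p"
proof (rule poly_mapping_eqI)
  fix x
  have "Poly_Mapping.lookup (zsc k p) x = zsc k (Poly_Mapping.lookup p x)"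
    by (rule zsc_hom_UNIV) (simp add: lookup_add)
  then show "Poly_Mapping.lookup (zsc k p) x = Poly_Mapping.lookup (frag_cmul k p) x" by (simp add: zsc_int)
qed

lemma frag_cmul_single: "frag_cmul k (frag_of x) = Poly_Mapping.single x k"
  by (rule poly_mapping_eqI) (simp add: lookup_single when_def)

lemma push_eq: "(\<Sum>x\<in>Poly_Mapping.keys f. Poly_Mapping.single (\<kappa> x) (Poly_Mapping.lookup f x))
   = frag_extend (\<lambda>x. frag_of (\<kappa> x)) f"
  by (simp add: frag_extend_def frag_cmul_single)

lemma lookup_push: "Poly_Mapping.lookup (frag_extend (\<lambda>x. frag_of (\<kappa> x)) f) y
   = (\<Sum>x\<in>{x\<in>Poly_Mapping.keys f. \<kappa> x = y}. Poly_Mapping.lookup f x)"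
proof -
  have "Poly_Mapping.lookup (frag_extend (\<lambda>x. frag_of (\<kappa> x)) f) y
      = (\<Sum>x\<in>Poly_Mapping.keys f. if \<kappa> x = y then Poly_Mapping.lookup f x else 0)"
    by (auto simp: frag_extend_def lookup_sum intro!: sum.cong)
  also have "\<dots> = (\<Sum>x\<in>{x\<in>Poly_Mapping.keys f. \<kappa> x = y}. Poly_Mapping.lookup f x)"
    by (simp add: sum.inter_filter)
  finally show ?thesis .
qed

lemma pz_push: "pz H f = frag_extend (\<lambda>a. frag_of (cplus {a} H)) f"
  unfolding pz_def by (rule push_eq)
lemma projc_push: "projc H f = frag_extend (\<lambda>C. frag_of (cplus C H)) f"
  unfolding projc_def by (rule push_eq)
lemma actR_push: "actR delta g f = frag_extend (\<lambda>C. frag_of ((\<lambda>x. x + delta g) ` C)) f"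
  unfolding actR_def by (rule push_eq)
lemma emb_push: "emb f = frag_extend (\<lambda>a. frag_of {a}) f"
  unfolding emb_def pz_push by (simp add: cplus_def)

lemma frag_expansion_single: "(f::'a \<Rightarrow>\<^sub>0 int) = (\<Sum>x\<in>Poly_Mapping.keys f. Poly_Mapping.single x (Poly_Mapping.lookup f x))"
  using frag_expansion[of f] by (simp add: push_eq)

lemma fe_compose: "frag_extend X (frag_extend Y c) = frag_extend (\<lambda>a. frag_extend X (Y a)) c"
  using subset_UNIV
  by (induction c rule: frag_induction) (auto simp: frag_extend_diff)

lemma frag_cmul_diff2: "frag_cmul k (x - y) = frag_cmul k x - frag_cmul k y"
  by (rule poly_mapping_eqI) (simp add: lookup_minus right_diff_distrib)

lemma fe_fun_diff: "frag_extend (\<lambda>a. F a - G a) f = frag_extend F f - frag_extend G f"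
  by (simp add: frag_extend_def frag_cmul_diff2 sum_subtractf)

lemma fe_fun_sum: "frag_extend (\<lambda>a. \<Sum>j\<in>J. F j a) f = (\<Sum>j\<in>J. frag_extend (F j) f)"
  unfolding frag_extend_def by (simp add: frag_cmul_sum sum.swap[of _ J])

lemma fe_mult_left: "(c::'a::comm_monoid_add \<Rightarrow>\<^sub>0 int) * frag_extend F f = frag_extend (\<lambda>a. c * F a) f"
proof -
  have "c * frag_cmul k x = frag_cmul k (c * x)" for k x
  proof -
    have "c * zsc k x = zsc k (c * x)"
      by (rule zsc_hom_UNIV) (simp add: distrib_left)
    then show ?thesis by (simp add: zsc_pm)
  qed
  then show ?thesis by (simp add: frag_extend_def sum_distrib_left)
qed

lemma fe_one: "frag_extend F (1 :: 'a::zero \<Rightarrow>\<^sub>0 int) = F 0"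
  using frag_extend_of[of F 0] by simp

lemma fe_if: "frag_extend X (if P then frag_of b else 0) = (if P then X b else 0)"
  by simp

lemma sum_lessThan_add_nat: "(\<Sum>i<n1+n2. g i) = (\<Sum>i<n1. g i) + (\<Sum>i<n2. g (n1 + i))"
  for g :: "nat \<Rightarrow> 'a::comm_monoid_add"
  by (induction n2) (simp_all add: add.assoc)

lemma ideal_mult_0: "0 \<in> ideal_mult I J"
  unfolding ideal_mult_def by (rule CollectI, rule exI[of _ 0]) simp

lemma ideal_mult_prod: "p \<in> I \<Longrightarrow> q \<in> J \<Longrightarrow> p * q \<in> ideal_mult I J"
  unfolding ideal_mult_def
  by (rule CollectI, rule exI[of _ 1], rule exI[of _ "\<lambda>_. p"], rule exI[of _ "\<lambda>_. q"]) simp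

lemma ideal_mult_add:
  assumes "x \<in> ideal_mult I J" "y \<in> ideal_mult I J" shows "x + y \<in> ideal_mult I J"
proof -
  obtain n1 :: nat and p1 q1 where 1: "\<forall>i<n1. p1 i \<in> I \<and> q1 i \<in> J" "x = (\<Sum>i<n1. p1 i * q1 i)"
    using assms(1) unfolding ideal_mult_def by blast
  obtain n2 :: nat and p2 q2 where 2: "\<forall>i<n2. p2 i \<in> I \<and> q2 i \<in> J" "y = (\<Sum>i<n2. p2 i * q2 i)"
    using assms(2) unfolding ideal_mult_def by blast
  define p where "p i = (if i < n1 then p1 i else p2 (i - n1))" for i
  define q where "q i = (if i < n1 then q1 i else q2 (i - n1))" for i
  have "x + y = (\<Sum>i<n1+n2. p i * q i)"
    unfolding sum_lessThan_add_nat 1 2 p_def q_def by simp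
  moreover have "\<forall>i<n1+n2. p i \<in> I \<and> q i \<in> J"
    using 1 2 unfolding p_def q_def by auto
  ultimately show ?thesis unfolding ideal_mult_def by blast
qed

lemma ideal_mult_sum:
  "finite A \<Longrightarrow> (\<And>a. a \<in> A \<Longrightarrow> x a \<in> ideal_mult I J) \<Longrightarrow> (\<Sum>a\<in>A. x a) \<in> ideal_mult I J"
  by (induction A rule: finite_induct) (auto intro: ideal_mult_0 ideal_mult_add)

lemma ideal_mult_mono: "J \<subseteq> J' \<Longrightarrow> ideal_mult I J \<subseteq> ideal_mult I J'"
  unfolding ideal_mult_def by blast

section \<open>Subgroup sums\<close>

definition Gsum :: "(nat \<Rightarrow> 'n::ab_group_add set) \<Rightarrow> nat set \<Rightarrow> 'n set" where
  "Gsum N T = {x. \<exists>n. (\<forall>w\<in>T. n w \<in> N w) \<and> x = (\<Sum>w\<in>T. n w)}"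

lemma sok_finite: "setting_ok V N delta \<Longrightarrow> finite V" by (simp add: setting_ok_def)
lemma sok_0: "setting_ok V N delta \<Longrightarrow> v \<in> V \<Longrightarrow> 0 \<in> N v" by (simp add: setting_ok_def)
lemma sok_add: "setting_ok V N delta \<Longrightarrow> v \<in> V \<Longrightarrow> x \<in> N v \<Longrightarrow> y \<in> N v \<Longrightarrow> x + y \<in> N v"
  by (simp add: setting_ok_def)
lemma sok_neg: "setting_ok V N delta \<Longrightarrow> v \<in> V \<Longrightarrow> x \<in> N v \<Longrightarrow> - x \<in> N v"
  by (simp add: setting_ok_def)
lemma sok_diff: "setting_ok V N delta \<Longrightarrow> v \<in> V \<Longrightarrow> x \<in> N v \<Longrightarrow> y \<in> N v \<Longrightarrow> x - y \<in> N v"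
  using sok_add[of V N delta v x "-y"] sok_neg[of V N delta v y] by simp
lemma sok_indep: "setting_ok V N delta \<Longrightarrow> (\<forall>v\<in>V. n v \<in> N v) \<Longrightarrow> (\<Sum>v\<in>V. n v) = 0 \<Longrightarrow> v \<in> V \<Longrightarrow> n v = 0"
  by (simp add: setting_ok_def)

context
  fixes V N delta assumes sok: "setting_ok V N delta"
begin

lemma Gsum_add: "T \<subseteq> V \<Longrightarrow> x \<in> Gsum N T \<Longrightarrow> y \<in> Gsum N T \<Longrightarrow> x + y \<in> Gsum N T"
proof -
  assume T: "T \<subseteq> V" and x: "x \<in> Gsum N T" and y: "y \<in> Gsum N T"
  obtain n1 where 1: "\<forall>w\<in>T. n1 w \<in> N w" "x = (\<Sum>w\<in>T. n1 w)" using x unfolding Gsum_def by blast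
  obtain n2 where 2: "\<forall>w\<in>T. n2 w \<in> N w" "y = (\<Sum>w\<in>T. n2 w)" using y unfolding Gsum_def by blast
  have "\<forall>w\<in>T. n1 w + n2 w \<in> N w" using 1 2 T sok_add[OF sok] by blast
  moreover have "x + y = (\<Sum>w\<in>T. n1 w + n2 w)" using 1 2 by (simp add: sum.distrib)
  ultimately show ?thesis unfolding Gsum_def by (intro CollectI exI[of _ "\<lambda>w. n1 w + n2 w"]) simp
qed

lemma Gsum_neg: "T \<subseteq> V \<Longrightarrow> x \<in> Gsum N T \<Longrightarrow> - x \<in> Gsum N T"
proof -
  assume T: "T \<subseteq> V" and x: "x \<in> Gsum N T"
  obtain n1 where 1: "\<forall>w\<in>T. n1 w \<in> N w" "x = (\<Sum>w\<in>T. n1 w)" using x unfolding Gsum_def by blast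
  have "\<forall>w\<in>T. - n1 w \<in> N w" using 1 T sok_neg[OF sok] by blast
  moreover have "- x = (\<Sum>w\<in>T. - n1 w)" using 1 by (simp add: sum_negf)
  ultimately show ?thesis unfolding Gsum_def by (intro CollectI exI[of _ "\<lambda>w. - n1 w"]) simp
qed

lemma Gsum_0: "T \<subseteq> V \<Longrightarrow> 0 \<in> Gsum N T"
  unfolding Gsum_def using sok_0[OF sok] by (auto intro!: exI[of _ "\<lambda>_. 0"])

lemma Gsum_diff: "T \<subseteq> V \<Longrightarrow> x \<in> Gsum N T \<Longrightarrow> y \<in> Gsum N T \<Longrightarrow> x - y \<in> Gsum N T"
  using Gsum_add[of T x "-y"] Gsum_neg[of T y] by simp

lemma Gsum_single: "T \<subseteq> V \<Longrightarrow> w \<in> T \<Longrightarrow> y \<in> N w \<Longrightarrow> y \<in> Gsum N T"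
proof -
  assume T: "T \<subseteq> V" and w: "w \<in> T" and y: "y \<in> N w"
  have fT: "finite T" using T sok_finite[OF sok] finite_subset by blast
  have "\<forall>x\<in>T. (if x = w then y else 0) \<in> N x" using y T sok_0[OF sok] by auto
  moreover have "y = (\<Sum>x\<in>T. if x = w then y else 0)" using fT w by simp
  ultimately show ?thesis unfolding Gsum_def by (intro CollectI exI[of _ "\<lambda>x. if x = w then y else 0"]) simp
qed

lemma Gsum_insert:
  assumes "insert v T \<subseteq> V" "v \<notin> T"
  shows "x \<in> Gsum N (insert v T) \<longleftrightarrow> (\<exists>u\<in>N v. \<exists>h\<in>Gsum N T. x = u + h)"
proof -
  have fT: "finite T" using assms(1) sok_finite[OF sok] by (meson finite_subset subset_insertI2 subset_refl order_trans)
  show ?thesis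
  proof
    assume "x \<in> Gsum N (insert v T)"
    then obtain n where "\<forall>w\<in>insert v T. n w \<in> N w" "x = (\<Sum>w\<in>insert v T. n w)" unfolding Gsum_def by blast
    note nn = this
    have "n v \<in> N v" using nn(1) by simp
    moreover have "(\<Sum>w\<in>T. n w) \<in> Gsum N T" using nn(1) unfolding Gsum_def by (intro CollectI exI[of _ n]) simp
    moreover have "x = n v + (\<Sum>w\<in>T. n w)" using nn(2) fT assms(2) by simp
    ultimately show "\<exists>u\<in>N v. \<exists>h\<in>Gsum N T. x = u + h" by blast
  next
    assume "\<exists>u\<in>N v. \<exists>h\<in>Gsum N T. x = u + h"
    then obtain u h where u: "u \<in> N v" and h: "h \<in> Gsum N T" and x: "x = u + h" by blast
    from h obtain n where n: "\<forall>w\<in>T. n w \<in> N w" "h = (\<Sum>w\<in>T. n w)" unfolding Gsum_def by blast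
    define m where "m w = (if w = v then u else n w)" for w
    have "\<forall>w\<in>insert v T. m w \<in> N w" using u n unfolding m_def by auto
    moreover have "x = (\<Sum>w\<in>insert v T. m w)"
    proof -
      have "(\<Sum>w\<in>insert v T. m w) = m v + (\<Sum>w\<in>T. m w)" using fT assms(2) by simp
      also have "(\<Sum>w\<in>T. m w) = (\<Sum>w\<in>T. n w)" using assms(2) unfolding m_def by (intro sum.cong) auto
      finally show ?thesis using x n unfolding m_def by simp
    qed
    ultimately show "x \<in> Gsum N (insert v T)" unfolding Gsum_def by (intro CollectI exI[of _ m]) simp
  qed
qed

lemma indep_uniq:
  assumes "insert v T \<subseteq> V" "v \<notin> T" "u \<in> N v" "u' \<in> N v" "h \<in> Gsum N T" "h' \<in> Gsum N T"
    and eq: "u + h = u' + h'"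
  shows "u = u'"
proof -
  have fV: "finite V" using sok_finite[OF sok] .
  have fT: "finite T" using assms(1) fV by (meson finite_subset subset_insertI2 subset_refl order_trans)
  obtain m where m: "\<forall>w\<in>T. m w \<in> N w" "h = (\<Sum>w\<in>T. m w)" using assms(5) unfolding Gsum_def by blast
  obtain m' where m': "\<forall>w\<in>T. m' w \<in> N w" "h' = (\<Sum>w\<in>T. m' w)" using assms(6) unfolding Gsum_def by blast
  define n where "n x = (if x = v then u - u' else if x \<in> T then m x - m' x else 0)" for x
  have nN: "\<forall>x\<in>V. n x \<in> N x"
    unfolding n_def using assms m m' sok_diff[OF sok] sok_0[OF sok] by auto
  have "(\<Sum>x\<in>V. n x) = (\<Sum>x\<in>insert v T. n x) + (\<Sum>x\<in>V - insert v T. n x)"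
    using fV assms(1) by (metis sum.subset_diff add.commute)
  also have "(\<Sum>x\<in>V - insert v T. n x) = 0" unfolding n_def by (auto intro!: sum.neutral)
  also have "(\<Sum>x\<in>insert v T. n x) = (u - u') + (\<Sum>x\<in>T. m x - m' x)"
    using fT assms(2) unfolding n_def by (auto intro!: sum.cong)
  also have "\<dots> = (u + h) - (u' + h')" using m m' by (simp add: sum_subtractf algebra_simps)
  finally have "(\<Sum>x\<in>V. n x) = 0" using eq by simp
  then have "n v = 0" using sok_indep[OF sok nN] assms(1) by blast
  then show ?thesis unfolding n_def by simp
qed


lemma decomp:
  assumes vS: "insert v S \<subseteq> V" "v \<notin> S"
    and fv: "pz (N v) f = 0" and fS: "\<forall>w\<in>S. pz (N w) f = 0"
  shows "f \<in> ideal_mult (Iker (N v)) {g. \<forall>w\<in>S. pz (N w) g = 0}"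
proof -
  have SV: "S \<subseteq> V" and vV: "v \<in> V" using vS(1) by auto
  define H where "H = Gsum N S"
  define K where "K = Gsum N (insert v S)"
  have K_add: "x \<in> K \<Longrightarrow> y \<in> K \<Longrightarrow> x + y \<in> K" for x y unfolding K_def using Gsum_add vS(1) by blast
  have K_neg: "x \<in> K \<Longrightarrow> - x \<in> K" for x unfolding K_def using Gsum_neg vS(1) by blast
  have K_diff: "x \<in> K \<Longrightarrow> y \<in> K \<Longrightarrow> x - y \<in> K" for x y unfolding K_def using Gsum_diff vS(1) by blast
  have K_0: "0 \<in> K" unfolding K_def using Gsum_0 vS(1) by blast
  have H_add: "x \<in> H \<Longrightarrow> y \<in> H \<Longrightarrow> x + y \<in> H" for x y unfolding H_def using Gsum_add SV by blast
  have H_0: "0 \<in> H" unfolding H_def using Gsum_0 SV by blast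
  have Kiff: "x \<in> K \<longleftrightarrow> (\<exists>u\<in>N v. \<exists>h\<in>H. x = u + h)" for x
    unfolding K_def H_def using Gsum_insert[OF vS] .
  have Nv0: "0 \<in> N v" using sok_0[OF sok vV] .
  have HK: "h \<in> H \<Longrightarrow> h \<in> K" for h using Kiff[of h] Nv0 by force
  have NvK: "n \<in> N v \<Longrightarrow> n \<in> K" for n using Kiff[of n] H_0 by force
  have NwH: "w \<in> S \<Longrightarrow> n \<in> N w \<Longrightarrow> n \<in> H" for w n unfolding H_def using Gsum_single[OF SV] by blast
  have uniq: "u \<in> N v \<Longrightarrow> u' \<in> N v \<Longrightarrow> h \<in> H \<Longrightarrow> h' \<in> H \<Longrightarrow> u + h = u' + h' \<Longrightarrow> u = u'"
    for u u' h h' unfolding H_def using indep_uniq[OF vS] by blast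
  have cplus_mem: "t \<in> cplus {a} M \<longleftrightarrow> t - a \<in> M" for t a and M :: "'a set"
  proof
    assume "t \<in> cplus {a} M" then obtain m where "m \<in> M" "t = a + m" unfolding cplus_def by blast
    then show "t - a \<in> M" by simp
  next
    assume "t - a \<in> M" then have "t = a + (t - a)" "t - a \<in> M" by simp_all
    then show "t \<in> cplus {a} M" unfolding cplus_def by blast
  qed
  define rep where "rep a = (SOME t. t \<in> cplus {a} K)" for a
  have rep_in: "rep a - a \<in> K" for a
  proof -
    have "a \<in> cplus {a} K" using cplus_mem K_0 by simp
    then have "rep a \<in> cplus {a} K" unfolding rep_def by (rule someI)
    then show ?thesis using cplus_mem by blast
  qed
  have rep_eq: "b - a \<in> K \<Longrightarrow> rep b = rep a" for a b
  proof -
    assume ba: "b - a \<in> K"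
    have "cplus {b} K = cplus {a} K"
    proof (rule set_eqI)
      fix t
      have 1: "t - a = (t - b) + (b - a)" "t - b = (t - a) - (b - a)" by simp_all
      show "t \<in> cplus {b} K \<longleftrightarrow> t \<in> cplus {a} K"
        unfolding cplus_mem using 1 K_add K_diff ba by metis
    qed
    then show ?thesis unfolding rep_def by simp
  qed
  have aK: "a - rep a \<in> K" for a using K_neg[OF rep_in[of a]] by simp
  define u where "u a = (THE u. u \<in> N v \<and> a - rep a - u \<in> H)" for a
  have u_char: "u0 \<in> N v \<Longrightarrow> a - rep a - u0 \<in> H \<Longrightarrow> u a = u0" for u0 a
  proof -
    assume 1: "u0 \<in> N v" "a - rep a - u0 \<in> H"
    show "u a = u0" unfolding u_def
    proof (rule the_equality)
      show "u0 \<in> N v \<and> a - rep a - u0 \<in> H" using 1 by simp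
    next
      fix u1 assume 2: "u1 \<in> N v \<and> a - rep a - u1 \<in> H"
      have "u1 + (a - rep a - u1) = u0 + (a - rep a - u0)" by simp
      then show "u1 = u0" using uniq 1 2 by blast
    qed
  qed
  have u_prop: "u a \<in> N v \<and> a - rep a - u a \<in> H" for a
  proof -
    obtain u0 h where "u0 \<in> N v" "h \<in> H" "a - rep a = u0 + h" using Kiff aK by blast
    moreover have "a - rep a - u0 = h" using \<open>a - rep a = u0 + h\<close> by (simp add: algebra_simps)
    ultimately have "u0 \<in> N v" "a - rep a - u0 \<in> H" by simp_all
    then show ?thesis using u_char by simp
  qed
  have uS: "w \<in> S \<Longrightarrow> n \<in> N w \<Longrightarrow> u (a + n) = u a" for w n a
  proof -
    assume w: "w \<in> S" "n \<in> N w"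
    have nH: "n \<in> H" using NwH w by blast
    have r: "rep (a + n) = rep a" using rep_eq HK[OF nH] by simp
    have "a + n - rep (a + n) - u a = (a - rep a - u a) + n" using r by simp
    moreover have "(a - rep a - u a) + n \<in> H" using H_add u_prop nH by blast
    ultimately have "a + n - rep (a + n) - u a \<in> H" by (simp add: algebra_simps)
    then show ?thesis using u_char u_prop by blast
  qed
  have uv: "n \<in> N v \<Longrightarrow> u (a + n) = u a + n" for n a
  proof -
    assume n: "n \<in> N v"
    have r: "rep (a + n) = rep a" using rep_eq NvK[OF n] by simp
    have "a + n - rep (a + n) - (u a + n) = a - rep a - u a" using r by simp
    then show ?thesis using u_char u_prop sok_add[OF sok vV _ n] by metis
  qed
  define \<sigma> where "\<sigma> a = a - u a" for a
  have \<sigma>v: "n \<in> N v \<Longrightarrow> \<sigma> (a + n) = \<sigma> a" for n a unfolding \<sigma>_def using uv by simp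
  define \<tau> where "\<tau> C = \<sigma> (SOME a. a \<in> C)" for C
  have \<sigma>\<tau>: "\<sigma> a = \<tau> (cplus {a} (N v))" for a
  proof -
    have "a \<in> cplus {a} (N v)" using cplus_mem Nv0 by simp
    then have "(SOME a'. a' \<in> cplus {a} (N v)) \<in> cplus {a} (N v)" by (rule someI)
    then obtain m where "m \<in> N v" "(SOME a'. a' \<in> cplus {a} (N v)) = a + m"
      using cplus_mem by (metis add.commute diff_add_cancel)
    then show ?thesis unfolding \<tau>_def using \<sigma>v by simp
  qed
  have S2: "frag_extend (\<lambda>a. frag_of (\<sigma> a)) f = 0"
  proof -
    have "frag_extend (\<lambda>a. frag_of (\<sigma> a)) f
        = frag_extend (\<lambda>a. frag_extend (\<lambda>C. frag_of (\<tau> C)) (frag_of (cplus {a} (N v)))) f"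
      by (simp add: \<sigma>\<tau>)
    also have "\<dots> = frag_extend (\<lambda>C. frag_of (\<tau> C)) (pz (N v) f)"
      unfolding pz_push fe_compose ..
    finally show ?thesis using fv by simp
  qed
  define g where "g u0 = frag_extend (\<lambda>a. if u0 = u a then frag_of (\<sigma> a) else 0) f" for u0
  have g_in: "\<forall>w\<in>S. pz (N w) (g u0) = 0" for u0
  proof
    fix w assume w: "w \<in> S"
    have Nw0: "0 \<in> N w" using sok_0[OF sok] w SV by blast
    define U' where "U' C = u (SOME a. a \<in> C)" for C
    have uU: "u a = U' (cplus {a} (N w))" for a
    proof -
      have "a \<in> cplus {a} (N w)" using cplus_mem Nw0 by simp
      then have "(SOME a'. a' \<in> cplus {a} (N w)) \<in> cplus {a} (N w)" by (rule someI)
      then obtain m where "m \<in> N w" "(SOME a'. a' \<in> cplus {a} (N w)) = a + m"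
        using cplus_mem by (metis add.commute diff_add_cancel)
      then show ?thesis unfolding U'_def using uS w by simp
    qed
    have tr: "cplus {a - c} (N w) = (\<lambda>x. x - c) ` cplus {a} (N w)" for a c
    proof (rule set_eqI)
      fix t
      have "t \<in> (\<lambda>x. x - c) ` cplus {a} (N w) \<longleftrightarrow> t + c \<in> cplus {a} (N w)"
        by (auto simp: image_iff intro!: bexI[of _ "t + c"])
      then show "t \<in> cplus {a - c} (N w) \<longleftrightarrow> t \<in> (\<lambda>x. x - c) ` cplus {a} (N w)"
        unfolding cplus_mem by (simp add: algebra_simps)
    qed
    define X where "X C = (if u0 = U' C then frag_of ((\<lambda>x. x - u0) ` C) else 0)" for C
    have "pz (N w) (g u0) = frag_extend (\<lambda>a. if u0 = u a then frag_of (cplus {\<sigma> a} (N w)) else 0) f"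
      unfolding g_def pz_push fe_compose by (simp add: if_distrib cong: if_cong)
    also have "\<dots> = frag_extend (\<lambda>a. X (cplus {a} (N w))) f"
      by (rule frag_extend_eq) (auto simp: X_def uU[symmetric] \<sigma>_def tr)
    also have "\<dots> = frag_extend X (pz (N w) f)"
      unfolding pz_push fe_compose by simp
    finally show "pz (N w) (g u0) = 0" using fS w by simp
  qed
  have gv: "u0 \<in> N v \<Longrightarrow> frag_of u0 - 1 \<in> Iker (N v)" for u0
  proof -
    assume u0: "u0 \<in> N v"
    have "cplus {u0} (N v) = cplus {0} (N v)"
    proof (rule set_eqI)
      fix t
      have 1: "t - u0 = (t - 0) - u0" "t - 0 = (t - u0) + u0" by simp_all
      show "t \<in> cplus {u0} (N v) \<longleftrightarrow> t \<in> cplus {0} (N v)"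
        unfolding cplus_mem using 1 sok_add[OF sok vV] sok_diff[OF sok vV] u0 by metis
    qed
    then show ?thesis
      unfolding Iker_def pz_push by (simp add: frag_extend_diff fe_one)
  qed
  have prod: "(frag_of u0 - 1) * g u0 = frag_extend (\<lambda>a. if u0 = u a then frag_of a - frag_of (\<sigma> a) else 0) f" for u0
  proof -
    have "(frag_of u0 - 1) * g u0 = frag_extend (\<lambda>a. (frag_of u0 - 1) * (if u0 = u a then frag_of (\<sigma> a) else 0)) f"
      unfolding g_def by (rule fe_mult_left)
    also have "\<dots> = frag_extend (\<lambda>a. if u0 = u a then frag_of a - frag_of (\<sigma> a) else 0) f"
    proof (rule frag_extend_eq)
      fix a
      have "(frag_of u0 - 1) * frag_of (\<sigma> a) = frag_of (u0 + \<sigma> a) - frag_of (\<sigma> a)"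
        by (simp add: left_diff_distrib mult_single)
      moreover have "u0 = u a \<Longrightarrow> u0 + \<sigma> a = a" unfolding \<sigma>_def by simp
      ultimately show "(frag_of u0 - 1) * (if u0 = u a then frag_of (\<sigma> a) else 0)
          = (if u0 = u a then frag_of a - frag_of (\<sigma> a) else 0)" by auto
    qed
    finally show ?thesis .
  qed
  define U0 where "U0 = u ` Poly_Mapping.keys f"
  have fU0: "finite U0" unfolding U0_def by simp
  have "(\<Sum>u0\<in>U0. (frag_of u0 - 1) * g u0)
      = frag_extend (\<lambda>a. \<Sum>u0\<in>U0. if u0 = u a then frag_of a - frag_of (\<sigma> a) else 0) f"
    unfolding prod fe_fun_sum ..
  also have "\<dots> = frag_extend (\<lambda>a. frag_of a - frag_of (\<sigma> a)) f"
    by (rule frag_extend_eq) (simp add: fU0 U0_def)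
  also have "\<dots> = f"
    unfolding fe_fun_diff S2 using frag_expansion[of f] by simp
  finally have feq: "f = (\<Sum>u0\<in>U0. (frag_of u0 - 1) * g u0)" by simp
  show ?thesis
    unfolding feq
  proof (rule ideal_mult_sum[OF fU0])
    fix u0 assume "u0 \<in> U0"
    then have "u0 \<in> N v" unfolding U0_def using u_prop by blast
    then show "(frag_of u0 - 1) * g u0 \<in> ideal_mult (Iker (N v)) {g. \<forall>w\<in>S. pz (N w) g = 0}"
      using gv g_in by (intro ideal_mult_prod) auto
  qed
qed


lemma core:
  "distinct vs \<Longrightarrow> set vs \<subseteq> V \<Longrightarrow> \<forall>v\<in>set vs. pz (N v) f = 0
   \<Longrightarrow> f \<in> foldr (\<lambda>v J. ideal_mult (Iker (N v)) J) vs UNIV"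
proof (induction vs arbitrary: f)
  case Nil then show ?case by simp
next
  case (Cons v vs)
  have "f \<in> ideal_mult (Iker (N v)) {g. \<forall>w\<in>set vs. pz (N w) g = 0}"
    using Cons.prems by (intro decomp) auto
  moreover have "{g. \<forall>w\<in>set vs. pz (N w) g = 0} \<subseteq> foldr (\<lambda>v J. ideal_mult (Iker (N v)) J) vs UNIV"
    using Cons.IH Cons.prems by auto
  ultimately have "f \<in> ideal_mult (Iker (N v)) (foldr (\<lambda>v J. ideal_mult (Iker (N v)) J) vs UNIV)"
    using ideal_mult_mono by blast
  then show ?case by simp
qed

lemma Dideal_mem: "\<forall>v\<in>V. pz (N v) f = 0 \<Longrightarrow> f \<in> Dideal N V"
  unfolding Dideal_def using sok_finite[OF sok] by (intro core) auto

end


lemma zsc_add_right: "zsc k (x + y) = zsc k x + zsc k (y::'a::ab_group_add)"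
  by (simp add: zsc_def sum.distrib)

lemma gsmul_ext: "finite A \<Longrightarrow> Poly_Mapping.keys c \<subseteq> A \<Longrightarrow>
   gsmul act c x = (\<Sum>g\<in>A. zsc (Poly_Mapping.lookup c g) (act g x))"
  unfolding gsmul_def by (rule sum.mono_neutral_left) (auto simp: in_keys_iff)

lemma gsmul_add_left: "gsmul act (c + c') x = gsmul act c x + gsmul act c' x"
proof -
  let ?A = "Poly_Mapping.keys c \<union> Poly_Mapping.keys c'"
  have "gsmul act (c + c') x = (\<Sum>g\<in>?A. zsc (Poly_Mapping.lookup (c + c') g) (act g x))"
    by (rule gsmul_ext) (auto simp: keys_add)
  also have "\<dots> = (\<Sum>g\<in>?A. zsc (Poly_Mapping.lookup c g) (act g x)) + (\<Sum>g\<in>?A. zsc (Poly_Mapping.lookup c' g) (act g x))"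
    by (simp add: lookup_add zsc_add sum.distrib)
  also have "\<dots> = gsmul act c x + gsmul act c' x"
    by (subst (1 2) gsmul_ext[of ?A]) auto
  finally show ?thesis .
qed

lemma gsmul_zero_left[simp]: "gsmul act 0 x = 0" by (simp add: gsmul_def)

lemma gsmul_diff_left: "gsmul act (c - c') x = gsmul act c x - gsmul act c' x"
  using gsmul_add_left[of act "c - c'" c' x] by (simp add: algebra_simps)

lemma gsmul_sum_left: "gsmul act (\<Sum>e\<in>E. c e) x = (\<Sum>e\<in>E. gsmul act (c e) x)"
  by (induction E rule: infinite_finite_induct) (simp_all add: gsmul_add_left)

lemma gsmul_single: "gsmul act (frag_of g) x = act g x"
  by (simp add: gsmul_def)

lemma gsmul_add_right:
  assumes "\<And>g x y. act g (x + y) = act g x + act g y"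
  shows "gsmul act c (x + y) = gsmul act c x + gsmul act c y"
  by (simp add: gsmul_def assms zsc_add_right sum.distrib)

lemma gsmul_mult:
  fixes act :: "'g::comm_monoid_add \<Rightarrow> 'x::ab_group_add \<Rightarrow> 'x"
  assumes add: "\<And>g x y. act g (x + y) = act g x + act g y"
    and comp: "\<And>g h x. act (g + h) x = act g (act h x)"
  shows "gsmul act (c * c') x = gsmul act c (gsmul act c' x)"
proof -
  have ad: "gsmul act c (y + z) = gsmul act c y + gsmul act c z" for c y z
    by (rule gsmul_add_right) (rule add)
  have gd: "gsmul act c (y - z) = gsmul act c y - gsmul act c z" for c y z
    using ad[of c "y - z" z] by (simp add: algebra_simps)
  have g0: "gsmul act c 0 = 0" for c using ad[of c 0 0] by simp
  have ad1: "act g (y - z) = act g y - act g z" for g y z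
    using add[of g "y - z" z] by (simp add: algebra_simps)
  have a0: "act g 0 = 0" for g using add[of g 0 0] by simp
  have onel: "gsmul act (frag_of g * c') x = act g (gsmul act c' x)" for g c' x
    using subset_UNIV
  proof (induction c' arbitrary: x rule: frag_induction)
    case zero then show ?case by (simp add: a0)
  next
    case (one h) then show ?case by (simp add: mult_single gsmul_single comp)
  next
    case (diff a b) then show ?case by (simp add: right_diff_distrib gsmul_diff_left ad1)
  qed
  show ?thesis
    using subset_UNIV
  proof (induction c arbitrary: x rule: frag_induction)
    case zero then show ?case by simp
  next
    case (one g) then show ?case by (simp add: onel gsmul_single)
  next
    case (diff a b) then show ?case by (simp add: left_diff_distrib gsmul_diff_left)
  qed
qed

lemma gsmul_ringact: "gsmul ringact c y = c * (y :: 'g::comm_monoid_add \<Rightarrow>\<^sub>0 int)"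
  using subset_UNIV
proof (induction c rule: frag_induction)
  case zero then show ?case by simp
next
  case (one x) then show ?case by (simp add: gsmul_single ringact_def)
next
  case (diff a b) then show ?case by (simp add: gsmul_diff_left left_diff_distrib)
qed

lemma fun_sum_apply: "(\<Sum>i\<in>I. F i) (x::'b) = (\<Sum>i\<in>I. F i x)" for F :: "'i \<Rightarrow> 'b \<Rightarrow> 'a::comm_monoid_add"
  by (induction I rule: infinite_finite_induct) simp_all

lemma gsmul_pact: "gsmul (pact act) c f W = gsmul act c (f W)"
proof -
  have "zsc k h W = zsc k (h W)" for k and h :: "nat set \<Rightarrow> 'a"
    by (rule zsc_hom_UNIV[where F="\<lambda>h. h W"]) simp
  then show ?thesis by (simp add: gsmul_def fun_sum_apply pact_def)
qed

lemma dv_apply: "dv act B d y e' = (\<Sum>e\<in>{e\<in>B. y e \<noteq> 0}. gsmul act (d e e') (y e))"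
  by (simp add: dv_def)

lemma gmod_0: "is_gmod act M \<Longrightarrow> 0 \<in> M" by (simp add: is_gmod_def)
lemma gmod_add: "is_gmod act M \<Longrightarrow> x \<in> M \<Longrightarrow> y \<in> M \<Longrightarrow> x + y \<in> M" by (simp add: is_gmod_def)
lemma gmod_neg: "is_gmod act M \<Longrightarrow> x \<in> M \<Longrightarrow> - x \<in> M" by (simp add: is_gmod_def)
lemma gmod_act: "is_gmod act M \<Longrightarrow> x \<in> M \<Longrightarrow> act g x \<in> M" by (simp add: is_gmod_def)
lemma gmod_act_add: "is_gmod act M \<Longrightarrow> x \<in> M \<Longrightarrow> y \<in> M \<Longrightarrow> act g (x + y) = act g x + act g y"
  by (simp add: is_gmod_def)
lemma gmod_diff: "is_gmod act M \<Longrightarrow> x \<in> M \<Longrightarrow> y \<in> M \<Longrightarrow> x - y \<in> M"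
  using gmod_add[of act M x "-y"] gmod_neg[of act M y] by simp
lemma gmod_act0: "is_gmod act M \<Longrightarrow> act g 0 = 0"
  using gmod_act_add[of act M 0 0 g] gmod_0[of act M] by simp

lemma gmod_sum:
  assumes m: "is_gmod act M"
  shows "(\<And>i. i \<in> I \<Longrightarrow> x i \<in> M) \<Longrightarrow> (\<Sum>i\<in>I. x i) \<in> M"
proof (induction I rule: infinite_finite_induct)
  case (infinite A) then show ?case using gmod_0[OF m] by simp
next
  case empty then show ?case using gmod_0[OF m] by simp
next
  case (insert i I)
  then have "x i \<in> M" "(\<Sum>i\<in>I. x i) \<in> M" by simp_all
  then show ?case using insert.hyps gmod_add[OF m] by simp
qed

lemma gmod_zsc:
  assumes m: "is_gmod act M" and x: "x \<in> M" shows "zsc k x \<in> M"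
proof (rule zsc_closed[OF gmod_0[OF m] _ _ x])
  show "\<And>x y. x \<in> M \<Longrightarrow> y \<in> M \<Longrightarrow> x + y \<in> M" using gmod_add[OF m] .
  show "\<And>x. x \<in> M \<Longrightarrow> - x \<in> M" using gmod_neg[OF m] .
qed

lemma gmod_gsmul:
  assumes m: "is_gmod act M" and x: "x \<in> M" shows "gsmul act c x \<in> M"
  unfolding gsmul_def
proof (rule gmod_sum[OF m])
  fix g show "zsc (Poly_Mapping.lookup c g) (act g x) \<in> M"
    by (rule gmod_zsc[OF m gmod_act[OF m x]])
qed

lemma gsmul_zero_right_gmod: "is_gmod act M \<Longrightarrow> gsmul act c 0 = 0"
  by (simp add: gsmul_def gmod_act0)

lemma glin_add: "is_glin act1 M1 act2 M2 f \<Longrightarrow> x \<in> M1 \<Longrightarrow> y \<in> M1 \<Longrightarrow> f (x + y) = f x + f y"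
  by (simp add: is_glin_def)
lemma glin_in: "is_glin act1 M1 act2 M2 f \<Longrightarrow> x \<in> M1 \<Longrightarrow> f x \<in> M2"
  by (simp add: is_glin_def)
lemma glin_act: "is_glin act1 M1 act2 M2 f \<Longrightarrow> x \<in> M1 \<Longrightarrow> f (act1 g x) = act2 g (f x)"
  by (simp add: is_glin_def)

lemma glin_0: "is_gmod act1 M1 \<Longrightarrow> is_glin act1 M1 act2 M2 f \<Longrightarrow> f 0 = 0"
  using glin_add[of act1 M1 act2 M2 f 0 0] gmod_0[of act1 M1] by simp

lemma glin_sum:
  assumes m: "is_gmod act1 M1" and l: "is_glin act1 M1 act2 M2 f"
  shows "(\<And>i. i \<in> I \<Longrightarrow> x i \<in> M1) \<Longrightarrow> f (\<Sum>i\<in>I. x i) = (\<Sum>i\<in>I. f (x i))"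
proof (induction I rule: infinite_finite_induct)
  case (infinite A) then show ?case using glin_0[OF m l] by simp
next
  case empty then show ?case using glin_0[OF m l] by simp
next
  case (insert i I)
  have 1: "x i \<in> M1" using insert.prems by simp
  have 2: "(\<Sum>i\<in>I. x i) \<in> M1" by (rule gmod_sum[OF m]) (simp add: insert.prems)
  have "f (\<Sum>i\<in>insert i I. x i) = f (x i + (\<Sum>i\<in>I. x i))" using insert.hyps by simp
  also have "\<dots> = f (x i) + f (\<Sum>i\<in>I. x i)" by (rule glin_add[OF l 1 2])
  also have "f (\<Sum>i\<in>I. x i) = (\<Sum>i\<in>I. f (x i))" using insert.IH insert.prems by simp
  finally show ?case using insert.hyps by simp
qed

lemma glin_diff: "is_gmod act1 M1 \<Longrightarrow> is_glin act1 M1 act2 M2 f \<Longrightarrow> x \<in> M1 \<Longrightarrow> y \<in> M1 \<Longrightarrow> f (x - y) = f x - f y"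
  using glin_add[of act1 M1 act2 M2 f "x - y" y] gmod_diff[of act1 M1 x y] by (simp add: algebra_simps)

lemma glin_zsc:
  assumes m: "is_gmod act1 M1" and l: "is_glin act1 M1 act2 M2 f" and x: "x \<in> M1"
  shows "f (zsc k x) = zsc k (f x)"
proof (rule zsc_hom[OF gmod_0[OF m] _ _ x])
  show "\<And>x y. x \<in> M1 \<Longrightarrow> y \<in> M1 \<Longrightarrow> x + y \<in> M1" using gmod_add[OF m] .
  show "\<And>x. x \<in> M1 \<Longrightarrow> - x \<in> M1" using gmod_neg[OF m] .
  show "\<And>x y. x \<in> M1 \<Longrightarrow> y \<in> M1 \<Longrightarrow> f (x + y) = f x + f y" using glin_add[OF l] .
qed

lemma glin_gsmul:
  assumes m: "is_gmod act1 M1" and l: "is_glin act1 M1 act2 M2 f" and x: "x \<in> M1"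
  shows "f (gsmul act1 c x) = gsmul act2 c (f x)"
proof -
  have "f (gsmul act1 c x) = (\<Sum>g\<in>Poly_Mapping.keys c. f (zsc (Poly_Mapping.lookup c g) (act1 g x)))"
    unfolding gsmul_def by (rule glin_sum[OF m l]) (rule gmod_zsc[OF m gmod_act[OF m x]])
  also have "\<dots> = (\<Sum>g\<in>Poly_Mapping.keys c. zsc (Poly_Mapping.lookup c g) (act2 g (f x)))"
    by (rule sum.cong) (simp_all add: glin_zsc[OF m l gmod_act[OF m x]] glin_act[OF l x])
  finally show ?thesis unfolding gsmul_def .
qed

lemma actR_add: "actR delta g (x + y) = actR delta g x + actR delta g y"
  by (simp add: actR_push frag_extend_add)

lemma actR_comp:
  assumes "\<And>x y. delta (x + y) = delta x + delta y"
  shows "actR delta (g + h) x = actR delta g (actR delta h x)"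
proof -
  have "(\<lambda>y. y + delta (g + h)) ` C = (\<lambda>y. y + delta g) ` ((\<lambda>y. y + delta h) ` C)" for C
    by (auto simp: assms image_image algebra_simps)
  then show ?thesis by (simp add: actR_push fe_compose)
qed

lemma projc_actR: "projc P (actR delta g x) = actR delta g (projc P x)"
proof -
  have "cplus ((\<lambda>y. y + t) ` C) P = (\<lambda>y. y + t) ` (cplus C P)" for C and t :: 'a
    unfolding cplus_def by (auto simp: image_iff algebra_simps) (metis add.assoc add.commute)+
  then show ?thesis by (simp add: actR_push projc_push fe_compose)
qed

lemma projc_add: "projc P (x + y) = projc P x + projc P y"
  by (simp add: projc_push frag_extend_add)

lemma projc_sum: "projc P (\<Sum>i\<in>I. x i) = (\<Sum>i\<in>I. projc P (x i))"
  unfolding projc_push by (induction I rule: infinite_finite_induct) (simp_all add: frag_extend_add)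

lemma projc_diff: "projc P (x - y) = projc P x - projc P y"
  by (simp add: projc_push frag_extend_diff)

lemma projc_gsmul: "projc P (gsmul (actR delta) c x) = gsmul (actR delta) c (projc P x)"
proof -
  have "projc P (zsc k y) = zsc k (projc P y)" for k y
    by (rule zsc_hom_UNIV) (rule projc_add)
  then show ?thesis unfolding gsmul_def
    by (simp add: projc_sum projc_actR)
qed


section \<open>resolution\<close>

lemma resolution_zero:
  fixes d :: "nat \<Rightarrow> 'b \<Rightarrow> 'b \<Rightarrow> ('g::ab_group_add \<Rightarrow>\<^sub>0 int)"
  assumes fr: "free_resolution Bas d e0" and e': "e' \<in> Bas 2" and fE: "finite E" and EB: "E \<subseteq> Bas 1"
    and sub: "{e. d 1 e' e \<noteq> 0} \<subseteq> E"
  shows "(\<Sum>e\<in>E. d 0 e e0 * d 1 e' e) = 0"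
proof -
  have c2: "\<forall>i. \<forall>e\<in>Bas (Suc i). finite {e'. d i e e' \<noteq> 0} \<and> (\<forall>e'. d i e e' \<noteq> 0 \<longrightarrow> e' \<in> Bas i)"
    using fr unfolding free_resolution_def by blast
  have c4: "\<forall>i. \<forall>y\<in>tens (Bas (Suc i)) UNIV. dv ringact (Bas (Suc i)) (d i) y = (\<lambda>_. 0) \<longleftrightarrow>
          (\<exists>z\<in>tens (Bas (Suc (Suc i))) UNIV. dv ringact (Bas (Suc (Suc i))) (d (Suc i)) z = y)"
    using fr unfolding free_resolution_def by blast
  have e'S: "e' \<in> Bas (Suc (Suc 0))" using e' numeral_2_eq_2 by metis
  have e'2: "e' \<in> Bas (Suc 1)" using e'S by (metis One_nat_def)
  define y where "y e = d 1 e' e" for e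
  have yfin: "finite {e. y e \<noteq> 0}" and ysupp: "\<And>e. y e \<noteq> 0 \<Longrightarrow> e \<in> Bas 1"
    using c2 e'2 unfolding y_def by blast+
  have yt: "y \<in> tens (Bas (Suc 0)) UNIV" unfolding tens_def using yfin ysupp by auto
  define zz where "zz x = (if x = e' then (1::'g \<Rightarrow>\<^sub>0 int) else 0)" for x
  have zzt: "zz \<in> tens (Bas (Suc (Suc 0))) UNIV"
    unfolding tens_def zz_def using e'S by auto
  have "dv ringact (Bas (Suc (Suc 0))) (d (Suc 0)) zz = y"
  proof
    fix e
    have set: "{x \<in> Bas (Suc (Suc 0)). zz x \<noteq> 0} = {e'}" unfolding zz_def using e'S by auto
    show "dv ringact (Bas (Suc (Suc 0))) (d (Suc 0)) zz e = y e"
      unfolding dv_apply set by (simp add: gsmul_ringact zz_def y_def)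
  qed
  then have "dv ringact (Bas (Suc 0)) (d 0) y = (\<lambda>_. 0)" using c4 yt zzt by blast
  then have "(\<Sum>e\<in>{e\<in>Bas (Suc 0). y e \<noteq> 0}. gsmul ringact (d 0 e e0) (y e)) = 0"
    unfolding dv_apply by (metis (no_types, lifting))
  then have "(\<Sum>e\<in>{e\<in>Bas 1. y e \<noteq> 0}. d 0 e e0 * y e) = 0" by (simp add: gsmul_ringact)
  moreover have "(\<Sum>e\<in>{e\<in>Bas 1. y e \<noteq> 0}. d 0 e e0 * y e) = (\<Sum>e\<in>E. d 0 e e0 * y e)"
    by (rule sum.mono_neutral_left) (use fE sub EB in \<open>auto simp: y_def\<close>)
  ultimately show ?thesis unfolding y_def by simp
qed


definition sk :: "('n set \<Rightarrow>\<^sub>0 int) \<Rightarrow> bool" where "sk f \<longleftrightarrow> (\<forall>C\<in>Poly_Mapping.keys f. \<exists>x. C = {x})"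

lemma sk_0: "sk 0" by (simp add: sk_def)
lemma sk_mono: "Poly_Mapping.keys g \<subseteq> Poly_Mapping.keys f \<Longrightarrow> sk f \<Longrightarrow> sk g"
  unfolding sk_def by blast
lemma sk_un: "sk f \<Longrightarrow> sk g \<Longrightarrow> Poly_Mapping.keys h \<subseteq> Poly_Mapping.keys f \<union> Poly_Mapping.keys g \<Longrightarrow> sk h"
  unfolding sk_def by blast
lemma sk_add: "sk f \<Longrightarrow> sk g \<Longrightarrow> sk (f + g)" by (rule sk_un[OF _ _ keys_add])
lemma sk_diff: "sk f \<Longrightarrow> sk g \<Longrightarrow> sk (f - g)" by (rule sk_un[OF _ _ keys_diff])
lemma sk_sum: "(\<And>i. i \<in> I \<Longrightarrow> sk (F i)) \<Longrightarrow> sk (\<Sum>i\<in>I. F i)"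
proof (induction I rule: infinite_finite_induct)
  case (insert i I)
  then have "sk (F i)" "sk (\<Sum>i\<in>I. F i)" by simp_all
  then show ?case using insert.hyps sk_add by simp
qed (simp_all add: sk_0)
lemma sk_zsc: "sk f \<Longrightarrow> sk (zsc k f)" unfolding zsc_pm by (rule sk_mono[OF keys_cmul])
lemma sk_actR:
  assumes a: "sk f" shows "sk (actR delta g f)"
  unfolding sk_def
proof
  fix D assume "D \<in> Poly_Mapping.keys (actR delta g f)"
  moreover have "Poly_Mapping.keys (actR delta g f) \<subseteq> (\<Union>C\<in>Poly_Mapping.keys f. Poly_Mapping.keys (frag_of ((\<lambda>x. x + delta g) ` C)))"
    unfolding actR_push by (rule keys_frag_extend)
  ultimately have "D \<in> (\<Union>C\<in>Poly_Mapping.keys f. Poly_Mapping.keys (frag_of ((\<lambda>x. x + delta g) ` C)))"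
    by (rule rev_subsetD)
  then have "\<exists>C\<in>Poly_Mapping.keys f. D = (\<lambda>x. x + delta g) ` C" by simp
  then obtain C where C: "C \<in> Poly_Mapping.keys f" "D = (\<lambda>x. x + delta g) ` C" by blast
  from C(1) obtain x where "C = {x}" using a unfolding sk_def by blast
  then have "D = {x + delta g}" using C(2) by simp
  then show "\<exists>x. D = {x}" by blast
qed
lemma sk_gsmul: "sk f \<Longrightarrow> sk (gsmul (actR delta) c f)"
  unfolding gsmul_def by (intro sk_sum sk_zsc sk_actR)

lemma sk_emb:
  fixes z :: "'n::ab_group_add set \<Rightarrow>\<^sub>0 int"
  assumes "sk z"
  shows "\<exists>f. emb f = z \<and> (\<forall>H. pz H f = projc H z)"
proof -
  have fin: "finite {a. Poly_Mapping.lookup z {a} \<noteq> 0}"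
  proof -
    have "{a. Poly_Mapping.lookup z {a} \<noteq> 0} = (\<lambda>a. {a}) -` Poly_Mapping.keys z" by (auto simp: in_keys_iff)
    then show ?thesis by (simp add: finite_vimageI inj_on_def)
  qed
  define f where "f = Abs_poly_mapping (\<lambda>a. Poly_Mapping.lookup z {a})"
  have lf: "Poly_Mapping.lookup f a = Poly_Mapping.lookup z {a}" for a
    unfolding f_def using fin by simp
  have ef: "emb f = z"
  proof (rule poly_mapping_eqI)
    fix C
    show "Poly_Mapping.lookup (emb f) C = Poly_Mapping.lookup z C"
    proof (cases "\<exists>x. C = {x}")
      case True
      then obtain x where C: "C = {x}" by blast
      have "{a \<in> Poly_Mapping.keys f. {a} = C} = (if x \<in> Poly_Mapping.keys f then {x} else {})" using C by auto
      then show ?thesis unfolding emb_push lookup_push using C lf by (auto simp: in_keys_iff)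
    next
      case False
      then have s0: "{a \<in> Poly_Mapping.keys f. {a} = C} = {}" by auto
      have "C \<notin> Poly_Mapping.keys z" using False assms unfolding sk_def by blast
      then have "Poly_Mapping.lookup z C = 0" by (simp add: in_keys_iff)
      moreover have "Poly_Mapping.lookup (emb f) C = 0" unfolding emb_push lookup_push s0 by simp
      ultimately show ?thesis by simp
    qed
  qed
  have "pz H f = projc H z" for H
  proof -
    have "cplus {a} H = cplus {a} H" for a by simp
    show ?thesis unfolding ef[symmetric] pz_push projc_push emb_push fe_compose by simp
  qed
  then show ?thesis using ef by blast
qed


lemma actR_0: "actR delta g 0 = 0" by (simp add: actR_push)

lemma gsmulR_add: "gsmul (actR delta) c (x + y) = gsmul (actR delta) c x + gsmul (actR delta) c y"
  by (rule gsmul_add_right) (rule actR_add)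

lemma gsmulR_0: "gsmul (actR delta) c 0 = 0"
  using gsmulR_add[of delta c 0 0] by simp

lemma gsmulR_diff: "gsmul (actR delta) c (x - y) = gsmul (actR delta) c x - gsmul (actR delta) c y"
  using gsmulR_add[of delta c "x - y" y] by (simp add: algebra_simps)

lemma gsmulR_sum: "gsmul (actR delta) c (\<Sum>i\<in>I. x i) = (\<Sum>i\<in>I. gsmul (actR delta) c (x i))"
  by (induction I rule: infinite_finite_induct) (simp_all add: gsmulR_0 gsmulR_add)

lemma gsmulR_zsc: "gsmul (actR delta) c (zsc k x) = zsc k (gsmul (actR delta) c x)"
  by (rule zsc_hom_UNIV) (rule gsmulR_add)

lemma zsc_sign_inv: "zsc ((-1::int)^n) (zsc ((-1)^n) x) = x"
  by (simp add: zsc_sign)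

lemma zsc_sign_diff: "zsc ((-1::int)^n) (x - y) = zsc ((-1)^n) x - zsc ((-1)^n) (y::'a::ab_group_add)"
  by (simp add: zsc_sign)

lemma zsc_sign_sum: "zsc ((-1::int)^n) (\<Sum>i\<in>I. x i) = (\<Sum>i\<in>I. zsc ((-1)^n) (x i :: 'a::ab_group_add))"
  by (simp add: zsc_sign sum_negf)

theorem proposition1p7:
  fixes V :: "nat set" and N :: "nat \<Rightarrow> 'n::ab_group_add set" and delta :: "'g::ab_group_add \<Rightarrow> 'n"
    and Bas :: "nat \<Rightarrow> 'b set" and d :: "nat \<Rightarrow> 'b \<Rightarrow> 'b \<Rightarrow> ('g \<Rightarrow>\<^sub>0 int)" and e0 :: 'b
    and act :: "'g \<Rightarrow> 'm::ab_group_add \<Rightarrow> 'm" and Fc :: "nat set \<Rightarrow> 'm set"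
    and res :: "nat set \<Rightarrow> nat set \<Rightarrow> 'm \<Rightarrow> 'm" and phi :: "nat set \<Rightarrow> 'm \<Rightarrow> ('n set \<Rightarrow>\<^sub>0 int)"
    and xbar :: 'm and a :: "nat \<Rightarrow> 'b \<Rightarrow> nat set \<Rightarrow> 'm"
    and b :: "nat \<Rightarrow> 'b \<Rightarrow> nat set \<Rightarrow> ('n set \<Rightarrow>\<^sub>0 int)"
  assumes "setting_ok V N delta"
    and "free_resolution Bas d e0"
    and "shintani_datum V N delta Bas d act Fc res phi xbar"
    and "compatible_system V N delta Bas d e0 act Fc res phi xbar a b"
  shows "\<exists>f\<in>Dideal N V.
           emb f = phi V (a 0 e0 V) - dv (pact (actR delta)) (Bas 1) (d 0) (b 1) e0 V"
  proof -
  note sok = assms(1) and fr = assms(2)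
  have dadd: "\<And>x y. delta (x + y) = delta x + delta y" using sok unfolding setting_ok_def by blast
  have fV: "finite V" using sok_finite[OF sok] .
  note sd = assms(3)[unfolded shintani_datum_def]
  note fo = sd[THEN conjunct1, unfolded functor_ok_def]
  note nt = sd[THEN conjunct2, THEN conjunct1, unfolded nat_trans_ok_def]
  have fo1: "\<And>W. W \<subseteq> V \<Longrightarrow> is_gmod act (Fc W)" using fo[THEN conjunct1] by blast
  have fo2: "\<And>U W. U \<subseteq> W \<Longrightarrow> W \<subseteq> V \<Longrightarrow> is_glin act (Fc W) act (Fc U) (res W U)"
    using fo[THEN conjunct2, THEN conjunct1] by blast
  have nt1: "\<And>W. W \<subseteq> V \<Longrightarrow> is_glin act (Fc W) (actR delta) (Rc N V W) (phi W)"
    using nt[THEN conjunct1] by blast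
  have nt2: "\<And>U W y. U \<subseteq> W \<Longrightarrow> W \<subseteq> V \<Longrightarrow> y \<in> Fc W \<Longrightarrow> phi U (res W U y) = resR N V W U (phi W y)"
    using nt[THEN conjunct2] by blast
  define r where "r = card V"
  note cs = assms(4)[unfolded compatible_system_def Let_def, folded r_def]
  have cs_a: "\<And>j. j \<le> r \<Longrightarrow> a j \<in> tens (Bas j) (dsumk V Fc (r - j))"
    using cs[THEN conjunct1] by blast
  have cs_b: "\<And>j. 1 \<le> j \<Longrightarrow> j \<le> r + 1 \<Longrightarrow> b j \<in> tens (Bas j) (dsumk V (Rc N V) (r + 1 - j))"
    using cs[THEN conjunct2, THEN conjunct1] by blast
  have cs_d0: "\<And>j. j < r \<Longrightarrow> dv (pact act) (Bas (Suc j)) (d j) (a (Suc j)) = (\<lambda>e. hdiff V res (a j e))"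
    using cs[THEN conjunct2, THEN conjunct2, THEN conjunct2, THEN conjunct1] by blast
  have cs_d1: "\<And>j. 1 \<le> j \<Longrightarrow> j \<le> r \<Longrightarrow> (\<lambda>e. hdiff V (resR N V) (b j e))
            = (\<lambda>e W. phik V phi (a j e) W - dv (pact (actR delta)) (Bas (Suc j)) (d j) (b (Suc j)) e W)"
    using cs[THEN conjunct2, THEN conjunct2, THEN conjunct2, THEN conjunct2] by blast
  have a0V: "a 0 e0 V \<in> Fc V"
    using cs_a[of 0] unfolding tens_def dsumk_def r_def by simp
  have b1V: "\<And>e. b 1 e V \<in> Rc N V V"
    using cs_b[of 1] unfolding tens_def dsumk_def r_def by simp
  have b1fin: "finite {e. b 1 e \<noteq> 0}" and b1B: "\<And>e. e \<notin> Bas 1 \<Longrightarrow> b 1 e = 0"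
    using cs_b[of 1] unfolding tens_def by simp_all
  have HVV: "Hsub N V V = {0}" unfolding Hsub_def by simp
  have RcVV: "\<And>f. f \<in> Rc N V V \<Longrightarrow> sk f"
    unfolding Rc_def HVV sk_def cplus_def by simp
  define E1b where "E1b = {e \<in> Bas 1. b 1 e \<noteq> 0}"
  have dvb1: "dv (pact (actR delta)) (Bas 1) (d 0) (b 1) e0 V
      = (\<Sum>e\<in>E1b. gsmul (actR delta) (d 0 e e0) (b 1 e V))"
    unfolding dv_apply fun_sum_apply gsmul_pact E1b_def ..
  define z where "z = phi V (a 0 e0 V) - dv (pact (actR delta)) (Bas 1) (d 0) (b 1) e0 V"
  have skz: "sk z"
    unfolding z_def dvb1
    by (intro sk_diff sk_sum sk_gsmul RcVV b1V glin_in[OF nt1 a0V]) simp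
  have proj: "projc (N v) z = 0" if vV: "v \<in> V" for v
  proof -
    define W where "W = V - {v}"
    have WV: "W \<subseteq> V" unfolding W_def by blast
    have VW: "V - W = {v}" unfolding W_def using vV by blast
    have insW: "insert v W = V" unfolding W_def using vV by blast
    have r1: "1 \<le> r" unfolding r_def using vV fV by (metis One_nat_def Suc_leI card_gt_0_iff empty_iff)
    have cardW: "card W = r - 1" unfolding W_def r_def using vV fV by simp
    define s where "s = card {u \<in> W. u < v}"
    have hd: "hdiff V res' y W = zsc ((-1)^s) (res' V W (y V))" for res' :: "nat set \<Rightarrow> nat set \<Rightarrow> 'z \<Rightarrow> 'z::ab_group_add" and y
      unfolding hdiff_def VW s_def using WV insW by simp
    have HW: "Hsub N V W = N v"
    proof
      show "Hsub N V W \<subseteq> N v" unfolding Hsub_def VW by auto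
      show "N v \<subseteq> Hsub N V W" unfolding Hsub_def VW
      proof
        fix x assume "x \<in> N v"
        then show "x \<in> {x. \<exists>n. (\<forall>v\<in>{v}. n v \<in> N v) \<and> x = (\<Sum>v\<in>{v}. n v)}"
          by (intro CollectI exI[of _ "\<lambda>_. x"]) simp
      qed
    qed
    have resRW: "resR N V V W f = projc (N v) f" for f unfolding resR_def HW ..
    have mW: "is_gmod act (Fc W)" by (rule fo1[OF WV])
    have mV: "is_gmod act (Fc V)" by (rule fo1) simp
    have lres: "is_glin act (Fc V) act (Fc W) (res V W)" by (rule fo2[OF WV]) simp
    have lphi: "is_glin act (Fc W) (actR delta) (Rc N V W) (phi W)" by (rule nt1[OF WV])
    have nat: "phi W (res V W y) = projc (N v) (phi V y)" if "y \<in> Fc V" for y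
      using nt2[OF WV _ that] resRW by simp
    have resa0: "res V W (a 0 e0 V) \<in> Fc W" by (rule glin_in[OF lres a0V])
    have a1W: "a 1 e W \<in> Fc W" for e
      using cs_a[of 1] r1 WV cardW unfolding tens_def dsumk_def by simp
    have a1fin: "finite {e. a 1 e \<noteq> 0}"
      using cs_a[of 1] r1 unfolding tens_def by simp
    have b2fin: "finite {e. b 2 e \<noteq> 0}"
      using cs_b[of 2] r1 unfolding tens_def by simp
    define E1a where "E1a = {e \<in> Bas 1. a 1 e \<noteq> 0}"
    define E2 where "E2 = {e' \<in> Bas 2. b 2 e' \<noteq> 0}"
    have c2: "\<And>i e. e \<in> Bas (Suc i) \<Longrightarrow> finite {e'. d i e e' \<noteq> 0} \<and> (\<forall>e'. d i e e' \<noteq> 0 \<longrightarrow> e' \<in> Bas i)"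
      using fr unfolding free_resolution_def by blast
    have c2': "e' \<in> E2 \<Longrightarrow> finite {e. d 1 e' e \<noteq> 0} \<and> (\<forall>e. d 1 e' e \<noteq> 0 \<longrightarrow> e \<in> Bas 1)" for e'
    proof -
      assume "e' \<in> E2"
      then have "e' \<in> Bas 2" unfolding E2_def by simp
      then have "e' \<in> Bas (Suc 1)" by (metis numeral_2_eq_2 One_nat_def)
      then show ?thesis by (rule c2)
    qed
    define Ed where "Ed = (\<Union>e'\<in>E2. {e. d 1 e' e \<noteq> 0})"
    define E where "E = E1a \<union> E1b \<union> Ed"
    have fE2: "finite E2" unfolding E2_def using b2fin by (rule rev_finite_subset) blast
    have fE: "finite E"
    proof -
      have "finite E1a" unfolding E1a_def using a1fin by (rule rev_finite_subset) blast
      moreover have "finite E1b" unfolding E1b_def using b1fin by (rule rev_finite_subset) blast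
      moreover have "finite Ed" unfolding Ed_def using fE2 c2' by blast
      ultimately show ?thesis unfolding E_def by blast
    qed
    have EB: "E \<subseteq> Bas 1" unfolding E_def E1a_def E1b_def Ed_def using c2' by blast
    have cd0: "(\<Sum>e\<in>E. gsmul act (d 0 e e0) (a 1 e W)) = zsc ((-1)^s) (res V W (a 0 e0 V))"
    proof -
      have "dv (pact act) (Bas (Suc 0)) (d 0) (a (Suc 0)) e0 W = hdiff V res (a 0 e0) W"
        using cs_d0[of 0] r1 by simp
      then have "(\<Sum>e\<in>E1a. gsmul act (d 0 e e0) (a 1 e W)) = zsc ((-1)^s) (res V W (a 0 e0 V))"
        unfolding dv_apply fun_sum_apply gsmul_pact hd E1a_def by simp
      moreover have "(\<Sum>e\<in>E1a. gsmul act (d 0 e e0) (a 1 e W)) = (\<Sum>e\<in>E. gsmul act (d 0 e e0) (a 1 e W))"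
      proof (rule sum.mono_neutral_left[OF fE])
        show "E1a \<subseteq> E" unfolding E_def by blast
        show "\<forall>i\<in>E - E1a. gsmul act (d 0 i e0) (a 1 i W) = 0"
          using EB gsmul_zero_right_gmod[OF mW] unfolding E1a_def by auto
      qed
      ultimately show ?thesis by simp
    qed
    define DD where "DD e = (\<Sum>e'\<in>E2. gsmul (actR delta) (d 1 e' e) (b 2 e' W))" for e
    have cd1: "projc (N v) (b 1 e V) = zsc ((-1)^s) (phi W (a 1 e W)) - zsc ((-1)^s) (DD e)" for e
    proof -
      have "hdiff V (resR N V) (b 1 e) W = phik V phi (a 1 e) W - dv (pact (actR delta)) (Bas (Suc 1)) (d 1) (b (Suc 1)) e W"
        using fun_cong[OF fun_cong[OF cs_d1[of 1]], of e W] r1 by simp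
      then have "zsc ((-1)^s) (projc (N v) (b 1 e V)) = phi W (a 1 e W) - DD e"
        unfolding hd resRW phik_def dv_apply fun_sum_apply gsmul_pact DD_def E2_def using WV by (simp add: numeral_2_eq_2)
      then have "zsc ((-1)^s) (zsc ((-1)^s) (projc (N v) (b 1 e V))) = zsc ((-1)^s) (phi W (a 1 e W) - DD e)"
        by simp
      then show ?thesis unfolding zsc_sign_inv zsc_sign_diff .
    qed
    \<comment> \<open>the resolution kills the double boundary\<close>
    have DD0: "(\<Sum>e\<in>E. gsmul (actR delta) (d 0 e e0) (DD e)) = 0"
    proof -
      have "(\<Sum>e\<in>E. gsmul (actR delta) (d 0 e e0) (DD e))
          = (\<Sum>e\<in>E. \<Sum>e'\<in>E2. gsmul (actR delta) (d 0 e e0 * d 1 e' e) (b 2 e' W))"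
        unfolding DD_def gsmulR_sum
        by (simp add: gsmul_mult[OF actR_add actR_comp[OF dadd]])
      also have "\<dots> = (\<Sum>e'\<in>E2. gsmul (actR delta) (\<Sum>e\<in>E. d 0 e e0 * d 1 e' e) (b 2 e' W))"
        by (simp add: sum.swap[of _ E] gsmul_sum_left)
      also have "\<dots> = 0"
      proof (rule sum.neutral, rule ballI)
        fix e' assume e': "e' \<in> E2"
        have "(\<Sum>e\<in>E. d 0 e e0 * d 1 e' e) = 0"
        proof (rule resolution_zero[OF fr _ fE EB])
          show "e' \<in> Bas 2" using e' unfolding E2_def by simp
          show "{e. d 1 e' e \<noteq> 0} \<subseteq> E" unfolding E_def Ed_def using e' by blast
        qed
        then show "gsmul (actR delta) (\<Sum>e\<in>E. d 0 e e0 * d 1 e' e) (b 2 e' W) = 0" by simp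
      qed
      finally show ?thesis .
    qed
    define A where "A = phi W (res V W (a 0 e0 V))"
    have "projc (N v) z = projc (N v) (phi V (a 0 e0 V)) - (\<Sum>e\<in>E1b. gsmul (actR delta) (d 0 e e0) (projc (N v) (b 1 e V)))"
      unfolding z_def dvb1 projc_diff projc_sum projc_gsmul ..
    also have "projc (N v) (phi V (a 0 e0 V)) = A" unfolding A_def using nat[OF a0V] by simp
    also have "(\<Sum>e\<in>E1b. gsmul (actR delta) (d 0 e e0) (projc (N v) (b 1 e V)))
        = (\<Sum>e\<in>E. gsmul (actR delta) (d 0 e e0) (projc (N v) (b 1 e V)))"
    proof (rule sum.mono_neutral_left[OF fE])
      show "E1b \<subseteq> E" unfolding E_def by blast
      show "\<forall>i\<in>E - E1b. gsmul (actR delta) (d 0 i e0) (projc (N v) (b 1 i V)) = 0"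
        using EB unfolding E1b_def by (auto simp: gsmulR_0 projc_push)
    qed
    also have "\<dots> = zsc ((-1)^s) (\<Sum>e\<in>E. gsmul (actR delta) (d 0 e e0) (phi W (a 1 e W)))
                  - zsc ((-1)^s) (\<Sum>e\<in>E. gsmul (actR delta) (d 0 e e0) (DD e))"
      unfolding cd1 gsmulR_diff gsmulR_zsc sum_subtractf zsc_sign_sum ..
    also have "(\<Sum>e\<in>E. gsmul (actR delta) (d 0 e e0) (phi W (a 1 e W)))
        = phi W (\<Sum>e\<in>E. gsmul act (d 0 e e0) (a 1 e W))"
    proof -
      have "phi W (\<Sum>e\<in>E. gsmul act (d 0 e e0) (a 1 e W)) = (\<Sum>e\<in>E. phi W (gsmul act (d 0 e e0) (a 1 e W)))"
        by (rule glin_sum[OF mW lphi]) (rule gmod_gsmul[OF mW a1W])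
      also have "\<dots> = (\<Sum>e\<in>E. gsmul (actR delta) (d 0 e e0) (phi W (a 1 e W)))"
        by (rule sum.cong[OF refl]) (rule glin_gsmul[OF mW lphi a1W])
      finally show ?thesis by (rule sym)
    qed
    also have "\<dots> = zsc ((-1)^s) A"
      unfolding cd0 A_def by (rule glin_zsc[OF mW lphi resa0])
    finally show "projc (N v) z = 0" unfolding DD0 zsc_sign_inv by (simp add: zsc_sign)
  qed
  obtain f where f: "emb f = z" "\<forall>H. pz H f = projc H z" using sk_emb[OF skz] by blast
  have "f \<in> Dideal N V" using Dideal_mem[OF sok] f(2) proj by simp
  then show ?thesis using f(1) unfolding z_def by blast
qed

end
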